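(* Let $\mu$ be a Borel measure on the Sorgenfrey line $\mathbb R_\ell$ such that there is an open subset $U$ of $\mathbb R_\ell$ with $0<\mu(U)<+\infty$ and $\mu(\{x\})=0$ for every $x\in U$. Then the continuous valuation $\overline\mu$ on $\mathcal Q\mathbb R_\ell$ (with its Scott topology) defined by $\overline\mu(\mathcal U)=\mu(\{x\in\mathbb R:\{x\}\in\mathcal U\})$ for Scott-open $\mathcal U\subseteq\mathcal Q\mathbb R_\ell$ is not point-continuous. In particular, taking $\mu=\lambda$ the Lebesgue measure, $\overline\lambda$ is not point-continuous.
   Context: The Sorgenfrey line $\mathbb R_\ell$ is the set of reals with the topology generated by the half-open intervals $[a,b[$, $a<b$; its Borel $\sigma$-algebra coincides with that of the usual real line. $\mathcal Q\mathbb R_\ell$ denotes the set of non-empty compact subsets of $\mathbb R_\ell$, ordered by reverse inclusion $\supseteq$; it is a dcpo (directed suprema are intersections), and it carries its Scott topology. For a Scott-open $\mathcal U$, the set $\{x\in\mathbb R:\{x\}\in\mathcal U\}$ is open in $\mathbb R_\ell$, so $\overline\mu$ is well-defined. A valuation on a space $X$ is a map $\nu:\mathcal OX\to[0,\infty]$ that is strict, monotone and modular; it is continuous if it preserves directed suprema of opens. A valuation $\nu$ is point-continuous if for every open $U$ and every real $r$ with $0\le r<\nu(U)$ there is a finite subset $A\subseteq U$ such that $\nu(V)>r$ for every open $V\supseteq A$. *)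

theory Defs
  imports "HOL-Analysis.Analysis" "HOL-Probability.Probability"
begin

definition sorgenfrey :: "real topology" where
  "sorgenfrey = topology_generated_by {{a..<b} | a b. a < b}"

text \<open>QR_l: non-empty compact subsets of the Sorgenfrey line (ordered by reverse inclusion).\<close>
definition QRl :: "real set set" where
  "QRl = {K. K \<noteq> {} \<and> compactin sorgenfrey K}"

definition rev_directed :: "real set set \<Rightarrow> bool" where
  "rev_directed D \<longleftrightarrow> D \<noteq> {} \<and> (\<forall>K1\<in>D. \<forall>K2\<in>D. \<exists>K3\<in>D. K3 \<subseteq> K1 \<and> K3 \<subseteq> K2)"

text \<open>Scott-open subsets of QR_l (directed suprema are intersections).\<close>
definition scott_open_QRl :: "real set set \<Rightarrow> bool" where
  "scott_open_QRl \<U> \<longleftrightarrow> \<U> \<subseteq> QRl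
     \<and> (\<forall>K\<in>\<U>. \<forall>K'\<in>QRl. K' \<subseteq> K \<longrightarrow> K' \<in> \<U>)
     \<and> (\<forall>D. D \<subseteq> QRl \<and> rev_directed D \<and> \<Inter>D \<in> \<U> \<longrightarrow> D \<inter> \<U> \<noteq> {})"

definition scott_QRl :: "real set topology" where
  "scott_QRl = topology scott_open_QRl"

definition valuation :: "'a topology \<Rightarrow> ('a set \<Rightarrow> ennreal) \<Rightarrow> bool" where
  "valuation X \<nu> \<longleftrightarrow> \<nu> {} = 0
     \<and> (\<forall>U V. openin X U \<and> openin X V \<and> U \<subseteq> V \<longrightarrow> \<nu> U \<le> \<nu> V)
     \<and> (\<forall>U V. openin X U \<and> openin X V \<longrightarrow> \<nu> U + \<nu> V = \<nu> (U \<union> V) + \<nu> (U \<inter> V))"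

definition continuous_valuation :: "'a topology \<Rightarrow> ('a set \<Rightarrow> ennreal) \<Rightarrow> bool" where
  "continuous_valuation X \<nu> \<longleftrightarrow> valuation X \<nu>
     \<and> (\<forall>\<D>. \<D> \<noteq> {} \<and> (\<forall>U\<in>\<D>. openin X U)
           \<and> (\<forall>U\<in>\<D>. \<forall>V\<in>\<D>. \<exists>W\<in>\<D>. U \<subseteq> W \<and> V \<subseteq> W)
           \<longrightarrow> \<nu> (\<Union>\<D>) = (SUP U\<in>\<D>. \<nu> U))"

definition point_continuous :: "'a topology \<Rightarrow> ('a set \<Rightarrow> ennreal) \<Rightarrow> bool" where
  "point_continuous X \<nu> \<longleftrightarrow>
     (\<forall>U (r::real). openin X U \<and> 0 \<le> r \<and> ennreal r < \<nu> U \<longrightarrow>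
        (\<exists>A. finite A \<and> A \<subseteq> U \<and> (\<forall>V. openin X V \<and> A \<subseteq> V \<longrightarrow> ennreal r < \<nu> V)))"

definition mubar :: "real measure \<Rightarrow> real set set \<Rightarrow> ennreal" where
  "mubar M \<U> = emeasure M {x. {x} \<in> \<U>}"

end

theory Submission
  imports Defs
begin

lemma disjoint_intervals_countable:
  fixes S :: "real set" and a b :: "real \<Rightarrow> real"
  assumes ab: "\<And>x. x \<in> S \<Longrightarrow> a x < b x"
    and dj: "\<And>x y. x \<in> S \<Longrightarrow> y \<in> S \<Longrightarrow> x < y \<Longrightarrow> b x \<le> a y"
  shows "countable S"
proof -
  have "\<forall>x\<in>S. \<exists>q\<in>\<rat>. a x < q \<and> q < b x"
    using ab Rats_dense_in_real by blast
  then obtain q where q: "\<And>x. x \<in> S \<Longrightarrow> q x \<in> \<rat> \<and> a x < q x \<and> q x < b x"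
    by metis
  have inj: "inj_on q S"
  proof (rule inj_onI)
    fix x y assume xy: "x \<in> S" "y \<in> S" "q x = q y"
    show "x = y"
    proof (rule ccontr)
      assume "x \<noteq> y"
      then have "x < y \<or> y < x" by auto
      then show False
        using q[OF xy(1)] q[OF xy(2)] dj[OF xy(1) xy(2)] dj[OF xy(2) xy(1)] xy(3) by force
    qed
  qed
  have "q ` S \<subseteq> \<rat>" using q by auto
  then have "countable (q ` S)" using countable_rat countable_subset by blast
  then show ?thesis using inj countable_image_inj_on by blast
qed

lemma sorgenfrey_open_iff:
  "openin sorgenfrey U \<longleftrightarrow> (\<forall>x\<in>U. \<exists>d>0. {x..<x+d} \<subseteq> U)"
proof
  assume "openin sorgenfrey U"
  then have "generate_topology_on {{a..<b} | a b. a < b} U"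
    unfolding sorgenfrey_def by (rule openin_topology_generated_by)
  then show "\<forall>x\<in>U. \<exists>d>0. {x..<x+d} \<subseteq> U"
  proof induction
    case Empty then show ?case by simp
  next
    case (Int a b)
    show ?case
    proof
      fix x assume "x \<in> a \<inter> b"
      then obtain d1 d2 where "d1 > 0" "{x..<x+d1} \<subseteq> a" "d2 > 0" "{x..<x+d2} \<subseteq> b"
        using Int.IH by blast
      then show "\<exists>d>0. {x..<x+d} \<subseteq> a \<inter> b"
      proof (intro exI[of _ "min d1 d2"] conjI)
        have "{x..<x + min d1 d2} \<subseteq> {x..<x+d1}" "{x..<x + min d1 d2} \<subseteq> {x..<x+d2}" by auto
        with \<open>{x..<x+d1} \<subseteq> a\<close> \<open>{x..<x+d2} \<subseteq> b\<close>
        show "{x..<x + min d1 d2} \<subseteq> a \<inter> b" by blast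
      qed (use \<open>d1 > 0\<close> \<open>d2 > 0\<close> in auto)
    qed
  next
    case (UN K)
    then show ?case by (meson Union_iff Union_upper subset_trans)
  next
    case (Basis s)
    then obtain a b where s: "s = {a..<b}" by auto
    show ?case
    proof
      fix x assume "x \<in> s"
      then show "\<exists>d>0. {x..<x+d} \<subseteq> s" using s by (intro exI[of _ "b - x"]) auto
    qed
  qed
next
  assume H: "\<forall>x\<in>U. \<exists>d>0. {x..<x+d} \<subseteq> U"
  then obtain d where d: "\<And>x. x \<in> U \<Longrightarrow> d x > 0 \<and> {x..<x + d x} \<subseteq> U" by metis
  have U: "U = \<Union>((\<lambda>x. {x..<x + d x}) ` U)"
    using d by fastforce
  have "openin sorgenfrey (\<Union>((\<lambda>x. {x..<x + d x}) ` U))"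
    unfolding sorgenfrey_def
  proof (rule openin_Union, clarify)
    fix x assume "x \<in> U"
    then show "openin (topology_generated_by {{a..<b} |a b. a < b}) {x..<x + d x}"
      using d by (intro topology_generated_by_Basis) force
  qed
  then show "openin sorgenfrey U" using U by simp
qed

lemma sorgenfrey_topspace [simp]: "topspace sorgenfrey = UNIV"
proof -
  have "x \<in> \<Union>{{a..<b} | a b. a < b}" for x :: real
  proof (rule UnionI[of "{x..<x+1}"])
    show "{x..<x+1} \<in> {{a..<b} | a b. a < b}" by (intro CollectI exI[of _ x] exI[of _ "x+1"]) auto
  qed auto
  then show ?thesis unfolding sorgenfrey_def by auto
qed

lemma open_imp_sorgenfrey:
  assumes "open (U::real set)" shows "openin sorgenfrey U"
  unfolding sorgenfrey_open_iff
proof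
  fix x assume "x \<in> U"
  then obtain e where e: "e > 0" "ball x e \<subseteq> U" using assms open_contains_ball by blast
  have "{x..<x+e} \<subseteq> ball x e"
  proof
    fix y assume "y \<in> {x..<x+e}"
    then have "dist x y < e" by (simp add: dist_real_def)
    then show "y \<in> ball x e" by simp
  qed
  then show "\<exists>d>0. {x..<x+d} \<subseteq> U" using e by blast
qed

lemma Hausdorff_sorgenfrey: "Hausdorff_space sorgenfrey"
  unfolding Hausdorff_space_def
proof (intro allI impI)
  fix x y :: real assume "x \<in> topspace sorgenfrey \<and> y \<in> topspace sorgenfrey \<and> x \<noteq> y"
  then have "x \<noteq> y" by simp
  from hausdorff[OF this] obtain U V where "open U" "open V" "x \<in> U" "y \<in> V" "U \<inter> V = {}"
    by blast
  then show "\<exists>U V. openin sorgenfrey U \<and> openin sorgenfrey V \<and> x \<in> U \<and> y \<in> V \<and> disjnt U V"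
    unfolding disjnt_def using open_imp_sorgenfrey by blast
qed

lemma compact_sorgenfrey_closed: "compactin sorgenfrey K \<Longrightarrow> openin sorgenfrey (- K)"
proof -
  assume "compactin sorgenfrey K"
  then have "closedin sorgenfrey K" by (rule compactin_imp_closedin[OF Hausdorff_sorgenfrey])
  then have "openin sorgenfrey (topspace sorgenfrey - K)" by (simp add: closedin_def)
  then show ?thesis by (simp add: Compl_eq_Diff_UNIV)
qed

lemma sorgenfrey_compact_left_gap:
  assumes K: "compactin sorgenfrey K" and x: "x \<in> K"
  shows "\<exists>e>0. \<forall>z\<in>K. \<not> (x - e < z \<and> z < x)"
proof -
  let ?C = "insert {x..} ((\<lambda>y. {..<y}) ` {..<x})"
  have op: "\<forall>U\<in>?C. openin sorgenfrey U"
  proof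
    fix U assume "U \<in> ?C"
    then show "openin sorgenfrey U"
    proof
      assume "U = {x..}"
      then show ?thesis unfolding sorgenfrey_open_iff
        by (intro ballI exI[of _ 1]) auto
    next
      assume "U \<in> (\<lambda>y. {..<y}) ` {..<x}"
      then show ?thesis using open_imp_sorgenfrey by auto
    qed
  qed
  have cov: "K \<subseteq> \<Union>?C"
  proof
    fix z assume "z \<in> K"
    show "z \<in> \<Union>?C"
    proof (cases "x \<le> z")
      case True then show ?thesis by auto
    next
      case False
      then have "z \<in> {..<(z+x)/2}" "(z+x)/2 \<in> {..<x}" by auto
      then show ?thesis by blast
    qed
  qed
  obtain F where F: "finite F" "F \<subseteq> ?C" "K \<subseteq> \<Union>F"
    using K op cov unfolding compactin_def by meson
  define Y where "Y = {y. y < x \<and> {..<y} \<in> F}"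
  have "Y \<subseteq> (\<lambda>y. {..<y}) -` F" unfolding Y_def by auto
  moreover have "inj (\<lambda>y::real. {..<y})" by (auto simp: inj_on_def)
  ultimately have finY: "finite Y" using F(1) finite_vimageI finite_subset by blast
  define m where "m = Max (insert (x - 1) Y)"
  have mlt: "m < x" unfolding m_def using finY by (auto simp: Y_def)
  have ym: "y \<le> m" if "y \<in> Y" for y unfolding m_def using finY that by auto
  show ?thesis
  proof (intro exI[of _ "x - m"] conjI ballI notI)
    show "0 < x - m" using mlt by simp
  next
    fix z assume z: "z \<in> K" "x - (x - m) < z \<and> z < x"
    then obtain U where U: "U \<in> F" "z \<in> U" using F(3) by blast
    with F(2) have "U = {x..} \<or> (\<exists>y<x. U = {..<y})" by auto
    then show False
    proof
      assume "U = {x..}" then show False using U z by auto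
    next
      assume "\<exists>y<x. U = {..<y}"
      then obtain y where "y < x" "U = {..<y}" by blast
      then have "y \<in> Y" using U unfolding Y_def by auto
      then have "y \<le> m" by (rule ym)
      then show False using U z \<open>U = {..<y}\<close> by auto
    qed
  qed
qed

lemma sorgenfrey_compact_countable:
  assumes K: "compactin sorgenfrey K" shows "countable K"
proof -
  obtain e where e: "\<And>x. x \<in> K \<Longrightarrow> e x > 0 \<and> (\<forall>z\<in>K. \<not> (x - e x < z \<and> z < x))"
    using sorgenfrey_compact_left_gap[OF K] by metis
  show ?thesis
  proof (rule disjoint_intervals_countable[of K "\<lambda>x. x - e x" "\<lambda>x. x"])
    fix x assume "x \<in> K" then show "x - e x < x" using e by auto
  next
    fix x y assume "x \<in> K" "y \<in> K" "x < y"
    then have "\<not> (y - e y < x \<and> x < y)" using e[of y] by blast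
    then show "x \<le> y - e y" using \<open>x < y\<close> by linarith
  qed
qed

lemma sorgenfrey_lindelof:
  assumes op: "\<And>F. F \<in> \<F> \<Longrightarrow> openin sorgenfrey F"
  shows "\<exists>\<G>. \<G> \<subseteq> \<F> \<and> countable \<G> \<and> \<Union>\<G> = \<Union>\<F>"
proof -
  have "\<And>S. S \<in> interior ` \<F> \<Longrightarrow> openin (top_of_set UNIV) S" by auto
  then obtain \<H> where H: "\<H> \<subseteq> interior ` \<F>" "countable \<H>" "\<Union>\<H> = \<Union>(interior ` \<F>)"
    using Lindelof_openin by metis
  have "\<forall>S\<in>\<H>. \<exists>F\<in>\<F>. S = interior F" using H(1) by blast
  then obtain g where g: "\<And>S. S \<in> \<H> \<Longrightarrow> g S \<in> \<F> \<and> S = interior (g S)" by metis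
  define I where "I = \<Union>(interior ` \<F>)"
  define R where "R = \<Union>\<F> - I"
  have "\<forall>x\<in>R. \<exists>F d. F \<in> \<F> \<and> x \<in> F \<and> d > 0 \<and> {x..<x+d} \<subseteq> F"
  proof
    fix x assume "x \<in> R"
    then obtain F where "F \<in> \<F>" "x \<in> F" unfolding R_def by blast
    then show "\<exists>F d. F \<in> \<F> \<and> x \<in> F \<and> d > 0 \<and> {x..<x+d} \<subseteq> F"
      using op[of F] unfolding sorgenfrey_open_iff by blast
  qed
  then obtain f d where fd: "\<And>x. x \<in> R \<Longrightarrow> f x \<in> \<F> \<and> x \<in> f x \<and> d x > 0 \<and> {x..<x + d x} \<subseteq> f x"
    by metis
  have cR: "countable R"
  proof (rule disjoint_intervals_countable[of R "\<lambda>x. x" "\<lambda>x. x + d x"])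
    fix x assume "x \<in> R" then show "x < x + d x" using fd by auto
  next
    fix x y assume xy: "x \<in> R" "y \<in> R" "x < y"
    show "x + d x \<le> y"
    proof (rule ccontr)
      assume "\<not> x + d x \<le> y"
      then have "y \<in> {x<..<x + d x}" using xy by auto
      moreover have "{x<..<x + d x} \<subseteq> interior (f x)"
        using fd[OF xy(1)] by (intro interior_maximal) auto
      ultimately have "y \<in> I" unfolding I_def using fd[OF xy(1)] by blast
      then show False using xy(2) unfolding R_def by blast
    qed
  qed
  show ?thesis
  proof (intro exI[of _ "g ` \<H> \<union> f ` R"] conjI)
    show "g ` \<H> \<union> f ` R \<subseteq> \<F>" using g fd by auto
    show "countable (g ` \<H> \<union> f ` R)" using H(2) cR by auto
    show "\<Union>(g ` \<H> \<union> f ` R) = \<Union>\<F>"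
    proof
      show "\<Union>(g ` \<H> \<union> f ` R) \<subseteq> \<Union>\<F>" using g fd by auto
    next
      show "\<Union>\<F> \<subseteq> \<Union>(g ` \<H> \<union> f ` R)"
      proof
        fix z assume z: "z \<in> \<Union>\<F>"
        show "z \<in> \<Union>(g ` \<H> \<union> f ` R)"
        proof (cases "z \<in> I")
          case True
          then obtain S where S: "S \<in> \<H>" "z \<in> S" using H(3) unfolding I_def by blast
          then have "z \<in> g S" using g[OF S(1)] interior_subset by blast
          then show ?thesis using S(1) by blast
        next
          case False
          then have "z \<in> R" using z unfolding R_def by blast
          then show ?thesis using fd by blast
        qed
      qed
    qed
  qed
qed

lemma sorgenfrey_lindelof_idx:
  assumes op: "\<And>i. i \<in> I \<Longrightarrow> openin sorgenfrey (f i)"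
  shows "\<exists>J. J \<subseteq> I \<and> countable J \<and> (\<Union>i\<in>J. f i) = (\<Union>i\<in>I. f i)"
proof -
  obtain \<G> where G: "\<G> \<subseteq> f ` I" "countable \<G>" "\<Union>\<G> = \<Union>(f ` I)"
    using sorgenfrey_lindelof[of "f ` I"] op by blast
  define J where "J = inv_into I f ` \<G>"
  have "J \<subseteq> I" unfolding J_def using G(1) by (auto intro: inv_into_into)
  moreover have "countable J" unfolding J_def using G(2) by simp
  moreover have "f ` J = \<G>"
  proof -
    have "f ` J = (\<lambda>G. f (inv_into I f G)) ` \<G>" unfolding J_def image_image ..
    also have "\<dots> = (\<lambda>G. G) ` \<G>"
    proof (rule image_cong[OF refl])
      fix G assume "G \<in> \<G>"
      then have "G \<in> f ` I" using G(1) by blast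
      then show "f (inv_into I f G) = G" by (rule f_inv_into_f)
    qed
    finally show ?thesis by simp
  qed
  ultimately show ?thesis using G(3) by auto
qed

lemma sorgenfrey_open_borel:
  assumes "openin sorgenfrey U" shows "U \<in> sets borel"
proof -
  obtain d where d: "\<And>x. x \<in> U \<Longrightarrow> d x > 0 \<and> {x..<x + d x} \<subseteq> U"
    using assms unfolding sorgenfrey_open_iff by metis
  have "\<And>x. x \<in> U \<Longrightarrow> openin sorgenfrey {x..<x + d x}"
    unfolding sorgenfrey_open_iff by (intro ballI exI[of _ "x + d x - y" for x y]) auto
  then obtain J where J: "J \<subseteq> U" "countable J"
      "(\<Union>x\<in>J. {x..<x + d x}) = (\<Union>x\<in>U. {x..<x + d x})"
    using sorgenfrey_lindelof_idx[of U "\<lambda>x. {x..<x + d x}"] by blast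
  have "U = (\<Union>x\<in>U. {x..<x + d x})" using d by fastforce
  also have "\<dots> = (\<Union>x\<in>J. {x..<x + d x})" using J(3) by simp
  finally have U: "U = \<Union>((\<lambda>x. {x..<x + d x}) ` J)" .
  have "\<Union>((\<lambda>x. {x..<x + d x}) ` J) \<in> sets borel"
    by (rule sets.countable_Union) (use J(2) in auto)
  then show ?thesis using U by simp
qed

lemma singleton_QRl: "{x} \<in> QRl"
  unfolding QRl_def by (simp add: compactin_sing)

lemma QRl_countable: "K \<in> QRl \<Longrightarrow> countable K"
  unfolding QRl_def using sorgenfrey_compact_countable by blast

lemma rev_directed_finite:
  assumes D: "rev_directed D" and F: "finite F" "F \<subseteq> D"
  shows "\<exists>K\<in>D. \<forall>K'\<in>F. K \<subseteq> K'"
  using F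
proof (induction F rule: finite_induct)
  case empty then show ?case using D unfolding rev_directed_def by blast
next
  case (insert a F)
  then obtain K where K: "K \<in> D" "\<forall>K'\<in>F. K \<subseteq> K'" by blast
  have "a \<in> D" using insert by blast
  then obtain K3 where "K3 \<in> D" "K3 \<subseteq> K" "K3 \<subseteq> a" using D K(1) unfolding rev_directed_def by blast
  then show ?case using K(2) by blast
qed

lemma scott_open_below:
  assumes W: "openin sorgenfrey W"
  shows "scott_open_QRl {K\<in>QRl. K \<subseteq> W}"
  unfolding scott_open_QRl_def
proof (intro conjI allI impI ballI)
  fix D assume D: "D \<subseteq> QRl \<and> rev_directed D \<and> \<Inter>D \<in> {K\<in>QRl. K \<subseteq> W}"
  then obtain K0 where K0: "K0 \<in> D" unfolding rev_directed_def by blast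
  then have cK0: "compactin sorgenfrey K0" using D unfolding QRl_def by blast
  let ?C = "insert W (uminus ` D)"
  have op: "\<forall>U\<in>?C. openin sorgenfrey U"
  proof
    fix U assume "U \<in> ?C"
    then show "openin sorgenfrey U"
    proof
      assume "U = W" then show ?thesis using W by simp
    next
      assume "U \<in> uminus ` D"
      then obtain K' where "K' \<in> D" "U = - K'" by blast
      then have "compactin sorgenfrey K'" using D unfolding QRl_def by blast
      then show ?thesis using compact_sorgenfrey_closed \<open>U = - K'\<close> by simp
    qed
  qed
  have cov: "K0 \<subseteq> \<Union>?C"
  proof
    fix z assume z: "z \<in> K0"
    show "z \<in> \<Union>?C"
    proof (cases "z \<in> W")
      case True then show ?thesis by blast
    next
      case False
      then have "z \<notin> \<Inter>D" using D by blast
      then obtain K' where "K' \<in> D" "z \<notin> K'" by blast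
      then show ?thesis by blast
    qed
  qed
  obtain F where F: "finite F" "F \<subseteq> ?C" "K0 \<subseteq> \<Union>F"
    using cK0 op cov unfolding compactin_def by meson
  define G where "G = insert K0 {K'\<in>D. - K' \<in> F}"
  have "{K'\<in>D. - K' \<in> F} \<subseteq> uminus ` F"
  proof
    fix K' assume "K' \<in> {K'\<in>D. - K' \<in> F}"
    then have "- K' \<in> F" by simp
    then show "K' \<in> uminus ` F" by (rule image_eqI[rotated]) simp
  qed
  then have finG: "finite G" unfolding G_def using F(1) finite_subset by blast
  have "G \<subseteq> D" unfolding G_def using K0 by blast
  then obtain K where K: "K \<in> D" "\<forall>K'\<in>G. K \<subseteq> K'"
    using rev_directed_finite[of D G] D finG by blast
  have "K \<subseteq> W"
  proof
    fix z assume z: "z \<in> K"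
    then have "z \<in> K0" using K unfolding G_def by blast
    then obtain U where U: "U \<in> F" "z \<in> U" using F(3) by blast
    then have "U = W \<or> U \<in> uminus ` D" using F(2) by blast
    then show "z \<in> W"
    proof
      assume "U = W" then show ?thesis using U by simp
    next
      assume "U \<in> uminus ` D"
      then obtain K' where K': "K' \<in> D" "U = - K'" by blast
      then have "K' \<in> G" unfolding G_def using U by simp
      then have "z \<in> K'" using K z by blast
      then show ?thesis using U K' by simp
    qed
  qed
  then have "K \<in> D \<inter> {K\<in>QRl. K \<subseteq> W}" using K D by blast
  then show "D \<inter> {K\<in>QRl. K \<subseteq> W} \<noteq> {}" by blast
qed auto

lemma scott_open_sub: "scott_open_QRl U \<Longrightarrow> U \<subseteq> QRl"
  unfolding scott_open_QRl_def by simp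

lemma scott_open_down: "scott_open_QRl U \<Longrightarrow> K \<in> U \<Longrightarrow> K' \<in> QRl \<Longrightarrow> K' \<subseteq> K \<Longrightarrow> K' \<in> U"
  unfolding scott_open_QRl_def by blast

lemma scott_open_dir: "scott_open_QRl U \<Longrightarrow> D \<subseteq> QRl \<Longrightarrow> rev_directed D \<Longrightarrow> \<Inter>D \<in> U \<Longrightarrow> D \<inter> U \<noteq> {}"
  unfolding scott_open_QRl_def by blast

lemma scott_openI:
  assumes "U \<subseteq> QRl" "\<And>K K'. K \<in> U \<Longrightarrow> K' \<in> QRl \<Longrightarrow> K' \<subseteq> K \<Longrightarrow> K' \<in> U"
    "\<And>D. D \<subseteq> QRl \<Longrightarrow> rev_directed D \<Longrightarrow> \<Inter>D \<in> U \<Longrightarrow> D \<inter> U \<noteq> {}"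
  shows "scott_open_QRl U"
  unfolding scott_open_QRl_def using assms by blast

lemma istopology_scott: "istopology scott_open_QRl"
  unfolding istopology_def
proof (intro conjI allI impI)
  fix S T assume ST: "scott_open_QRl S" "scott_open_QRl T"
  show "scott_open_QRl (S \<inter> T)"
  proof (rule scott_openI)
    show "S \<inter> T \<subseteq> QRl" using scott_open_sub[OF ST(1)] by blast
  next
    fix K K' assume "K \<in> S \<inter> T" "K' \<in> QRl" "K' \<subseteq> K"
    then show "K' \<in> S \<inter> T" using scott_open_down[OF ST(1)] scott_open_down[OF ST(2)] by blast
  next
    fix D assume D: "D \<subseteq> QRl" "rev_directed D" "\<Inter>D \<in> S \<inter> T"
    obtain K1 where K1: "K1 \<in> D" "K1 \<in> S" using scott_open_dir[OF ST(1) D(1,2)] D(3) by blast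
    obtain K2 where K2: "K2 \<in> D" "K2 \<in> T" using scott_open_dir[OF ST(2) D(1,2)] D(3) by blast
    obtain K3 where K3: "K3 \<in> D" "K3 \<subseteq> K1" "K3 \<subseteq> K2"
      using D(2) K1(1) K2(1) unfolding rev_directed_def by blast
    then have "K3 \<in> QRl" using D by blast
    then have "K3 \<in> S" "K3 \<in> T"
      using scott_open_down[OF ST(1) K1(2)] scott_open_down[OF ST(2) K2(2)] K3 by auto
    then show "D \<inter> (S \<inter> T) \<noteq> {}" using K3 by blast
  qed
next
  fix \<K> assume K: "\<forall>S\<in>\<K>. scott_open_QRl S"
  show "scott_open_QRl (\<Union>\<K>)"
  proof (rule scott_openI)
    show "\<Union>\<K> \<subseteq> QRl" using K scott_open_sub by blast
  next
    fix L K' assume "L \<in> \<Union>\<K>" "K' \<in> QRl" "K' \<subseteq> L"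
    then obtain S where "S \<in> \<K>" "L \<in> S" by blast
    then have "K' \<in> S" using scott_open_down[of S L K'] K \<open>K' \<in> QRl\<close> \<open>K' \<subseteq> L\<close> by blast
    then show "K' \<in> \<Union>\<K>" using \<open>S \<in> \<K>\<close> by blast
  next
    fix D assume D: "D \<subseteq> QRl" "rev_directed D" "\<Inter>D \<in> \<Union>\<K>"
    then obtain S where S: "S \<in> \<K>" "\<Inter>D \<in> S" by blast
    then have "D \<inter> S \<noteq> {}" using K scott_open_dir[OF _ D(1,2)] by blast
    then show "D \<inter> \<Union>\<K> \<noteq> {}" using S by blast
  qed
qed

lemma openin_scott: "openin scott_QRl U \<longleftrightarrow> scott_open_QRl U"
  unfolding scott_QRl_def using topology_inverse'[OF istopology_scott] by simp

lemma inv_Suc_mono: "N \<le> m \<Longrightarrow> 1 / real (Suc m) \<le> 1 / real (Suc N)"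
  by (simp add: divide_simps)

lemma scott_open_points:
  assumes U: "scott_open_QRl U"
  shows "openin sorgenfrey {x. {x} \<in> U}"
  unfolding sorgenfrey_open_iff
proof (rule ballI, rule ccontr)
  fix x assume x: "x \<in> {x. {x} \<in> U}" and nd: "\<not> (\<exists>d>0. {x..<x+d} \<subseteq> {x. {x} \<in> U})"
  have "\<forall>n::nat. \<exists>y. x \<le> y \<and> y < x + 1 / real (Suc n) \<and> {y} \<notin> U"
  proof
    fix n :: nat
    have "(1 / real (Suc n)) > 0" by simp
    then have "\<not> {x..<x + 1 / real (Suc n)} \<subseteq> {x. {x} \<in> U}" using nd by blast
    then show "\<exists>y. x \<le> y \<and> y < x + 1 / real (Suc n) \<and> {y} \<notin> U" by auto
  qed
  then obtain y where y: "\<And>n. x \<le> y n \<and> y n < x + 1 / real (Suc n) \<and> {y n} \<notin> U" by metis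
  have ygt: "x < y n" for n
  proof -
    have "y n \<noteq> x" using y[of n] x by auto
    then show ?thesis using y[of n] by simp
  qed
  define K where "K n = insert x (y ` {n..})" for n
  have Kmono: "K m \<subseteq> K n" if "n \<le> m" for n m
    unfolding K_def using that by auto
  have cK: "compactin sorgenfrey (K n)" for n
    unfolding compactin_def
  proof (intro conjI allI impI)
    show "K n \<subseteq> topspace sorgenfrey" by simp
  next
    fix \<C> assume C: "(\<forall>Oo\<in>\<C>. openin sorgenfrey Oo) \<and> K n \<subseteq> \<Union>\<C>"
    have "x \<in> K n" unfolding K_def by simp
    then obtain Oo where Oo: "Oo \<in> \<C>" "x \<in> Oo" using C by blast
    then obtain d where d: "d > 0" "{x..<x+d} \<subseteq> Oo"
      using C unfolding sorgenfrey_open_iff by blast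
    obtain N where N: "inverse (real (Suc N)) < d" using reals_Archimedean[OF d(1)] by blast
    have "\<forall>m\<in>{n..<N}. \<exists>Oo'\<in>\<C>. y m \<in> Oo'"
    proof
      fix m assume "m \<in> {n..<N}"
      then have "y m \<in> K n" unfolding K_def by auto
      then show "\<exists>Oo'\<in>\<C>. y m \<in> Oo'" using C by blast
    qed
    then obtain h where h: "\<And>m. m \<in> {n..<N} \<Longrightarrow> h m \<in> \<C> \<and> y m \<in> h m" by metis
    show "\<exists>F. finite F \<and> F \<subseteq> \<C> \<and> K n \<subseteq> \<Union>F"
    proof (intro exI[of _ "insert Oo (h ` {n..<N})"] conjI)
      show "finite (insert Oo (h ` {n..<N}))" by simp
      show "insert Oo (h ` {n..<N}) \<subseteq> \<C>" using Oo h by blast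
      show "K n \<subseteq> \<Union>(insert Oo (h ` {n..<N}))"
      proof
        fix z assume "z \<in> K n"
        then have "z = x \<or> (\<exists>m\<ge>n. z = y m)" unfolding K_def by auto
        then show "z \<in> \<Union>(insert Oo (h ` {n..<N}))"
        proof
          assume "z = x" then show ?thesis using Oo by blast
        next
          assume "\<exists>m\<ge>n. z = y m"
          then obtain m where m: "m \<ge> n" "z = y m" by blast
          show ?thesis
          proof (cases "m < N")
            case True
            then have "m \<in> {n..<N}" using m by simp
            then show ?thesis using h m by blast
          next
            case False
            then have "1 / real (Suc m) \<le> 1 / real (Suc N)" by (intro inv_Suc_mono) simp
            then have "y m < x + d" using y[of m] N by (simp add: inverse_eq_divide)
            then have "y m \<in> Oo" using y[of m] d(2) by auto
            then show ?thesis using m by blast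
          qed
        qed
      qed
    qed
  qed
  have KQ: "K n \<in> QRl" for n
    unfolding QRl_def using cK[of n] by (simp add: K_def)
  have dir: "rev_directed (range K)"
    unfolding rev_directed_def
  proof (intro conjI ballI)
    show "range K \<noteq> {}" by simp
  next
    fix K1 K2 assume "K1 \<in> range K" "K2 \<in> range K"
    then obtain a b where "K1 = K a" "K2 = K b" by blast
    then show "\<exists>K3\<in>range K. K3 \<subseteq> K1 \<and> K3 \<subseteq> K2"
      using Kmono[of a "max a b"] Kmono[of b "max a b"] by auto
  qed
  have inter: "\<Inter>(range K) = {x}"
  proof
    show "{x} \<subseteq> \<Inter>(range K)" unfolding K_def by auto
  next
    show "\<Inter>(range K) \<subseteq> {x}"
    proof
      fix z assume z: "z \<in> \<Inter>(range K)"
      show "z \<in> {x}"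
      proof (rule ccontr)
        assume zx: "z \<notin> {x}"
        have "z \<in> K 0" using z by blast
        then obtain m0 where "z = y m0" using zx unfolding K_def by auto
        then have "z - x > 0" using ygt[of m0] by simp
        then obtain n where n: "inverse (real (Suc n)) < z - x"
          using reals_Archimedean by blast
        have "z \<in> K n" using z by blast
        then obtain m where m: "m \<ge> n" "z = y m" using zx unfolding K_def by auto
        have "1 / real (Suc m) \<le> 1 / real (Suc n)" using m(1) by (rule inv_Suc_mono)
        then show False using y[of m] m(2) n by (simp add: inverse_eq_divide)
      qed
    qed
  qed
  have "\<Inter>(range K) \<in> U" using inter x by simp
  then have "range K \<inter> U \<noteq> {}" using scott_open_dir[OF U _ dir] KQ by blast
  then obtain n where "K n \<in> U" by blast
  moreover have "{y n} \<subseteq> K n" unfolding K_def by auto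
  ultimately have "{y n} \<in> U" using scott_open_down[OF U] singleton_QRl by blast
  then show False using y[of n] by blast
qed

lemma pts_sets:
  assumes "sets M = sets borel" "scott_open_QRl U"
  shows "{x. {x} \<in> U} \<in> sets M"
  using sorgenfrey_open_borel[OF scott_open_points[OF assms(2)]] assms(1) by simp

lemma scott_open_Union: "(\<And>U. U \<in> \<D> \<Longrightarrow> scott_open_QRl U) \<Longrightarrow> scott_open_QRl (\<Union>\<D>)"
  using openin_Union[of \<D> scott_QRl] unfolding openin_scott by blast

lemma cont_val:
  assumes M: "sets M = sets borel"
  shows "continuous_valuation scott_QRl (mubar M)"
  unfolding continuous_valuation_def valuation_def openin_scott mubar_def
proof (intro conjI allI impI)
  show "emeasure M {x. {x} \<in> {}} = 0" by simp
next
  fix U V assume UV: "scott_open_QRl U \<and> scott_open_QRl V \<and> U \<subseteq> V"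
  then show "emeasure M {x. {x} \<in> U} \<le> emeasure M {x. {x} \<in> V}"
    using pts_sets[OF M] by (intro emeasure_mono) auto
next
  fix U V assume UV: "scott_open_QRl U \<and> scott_open_QRl V"
  have "{x. {x} \<in> U \<union> V} = {x. {x} \<in> U} \<union> {x. {x} \<in> V}"
       "{x. {x} \<in> U \<inter> V} = {x. {x} \<in> U} \<inter> {x. {x} \<in> V}" by auto
  then show "emeasure M {x. {x} \<in> U} + emeasure M {x. {x} \<in> V} =
         emeasure M {x. {x} \<in> U \<union> V} + emeasure M {x. {x} \<in> U \<inter> V}"
    using emeasure_Un_Int[OF pts_sets[OF M] pts_sets[OF M]] UV by simp
next
  fix \<D> assume D: "\<D> \<noteq> {} \<and> (\<forall>U\<in>\<D>. scott_open_QRl U) \<and> (\<forall>U\<in>\<D>. \<forall>V\<in>\<D>. \<exists>W\<in>\<D>. U \<subseteq> W \<and> V \<subseteq> W)"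
  define S where "S U = {x. {x} \<in> U}" for U :: "real set set"
  have Smono: "U \<subseteq> V \<Longrightarrow> S U \<subseteq> S V" for U V unfolding S_def by auto
  have Ssets: "U \<in> \<D> \<Longrightarrow> S U \<in> sets M" for U using D pts_sets[OF M] unfolding S_def by blast
  obtain J where J: "J \<subseteq> \<D>" "countable J" "(\<Union>U\<in>J. S U) = (\<Union>U\<in>\<D>. S U)"
    using sorgenfrey_lindelof_idx[of \<D> S] D scott_open_points unfolding S_def by blast
  obtain U0 where U0: "U0 \<in> \<D>" using D by blast
  define J' where "J' = insert U0 J"
  have J': "J' \<noteq> {}" "countable J'" "J' \<subseteq> \<D>" using J U0 unfolding J'_def by auto
  define g where "g = from_nat_into J'"
  have gD: "g n \<in> \<D>" for n unfolding g_def using from_nat_into[OF J'(1)] J'(3) by blast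
  have rg: "range g = J'" unfolding g_def using range_from_nat_into[OF J'(1,2)] .
  define h where "h = rec_nat (g 0) (\<lambda>n H. SOME W. W \<in> \<D> \<and> H \<subseteq> W \<and> g (Suc n) \<subseteq> W)"
  have h0: "h 0 = g 0" unfolding h_def by simp
  have hS: "h (Suc n) = (SOME W. W \<in> \<D> \<and> h n \<subseteq> W \<and> g (Suc n) \<subseteq> W)" for n
    unfolding h_def by simp
  have hstep: "h (Suc n) \<in> \<D> \<and> h n \<subseteq> h (Suc n) \<and> g (Suc n) \<subseteq> h (Suc n)" if "h n \<in> \<D>" for n
  proof -
    have "\<forall>U\<in>\<D>. \<forall>V\<in>\<D>. \<exists>W\<in>\<D>. U \<subseteq> W \<and> V \<subseteq> W" using D by blast
    then have "\<exists>W\<in>\<D>. h n \<subseteq> W \<and> g (Suc n) \<subseteq> W" using that gD[of "Suc n"] by blast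
    then have "\<exists>W. W \<in> \<D> \<and> h n \<subseteq> W \<and> g (Suc n) \<subseteq> W" by blast
    then show ?thesis unfolding hS by (rule someI_ex)
  qed
  have hD: "h n \<in> \<D> \<and> g n \<subseteq> h n" for n
  proof (induction n)
    case 0 then show ?case using h0 gD by simp
  next
    case (Suc n) then show ?case using hstep by blast
  qed
  have inc: "incseq (\<lambda>n. S (h n))"
  proof (rule incseq_SucI)
    fix n
    have "h n \<subseteq> h (Suc n)" using hstep[of n] hD[of n] by blast
    then show "S (h n) \<subseteq> S (h (Suc n))" by (rule Smono)
  qed
  have UnD: "S (\<Union>\<D>) = (\<Union>U\<in>\<D>. S U)" unfolding S_def by auto
  have eq: "(\<Union>U\<in>\<D>. S U) = (\<Union>n. S (h n))"
  proof
    show "(\<Union>n. S (h n)) \<subseteq> (\<Union>U\<in>\<D>. S U)"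
    proof (rule UN_least)
      fix n show "S (h n) \<subseteq> (\<Union>U\<in>\<D>. S U)" using hD[of n] by blast
    qed
  next
    have "(\<Union>U\<in>\<D>. S U) = (\<Union>U\<in>J. S U)" using J(3) by simp
    also have "\<dots> \<subseteq> (\<Union>U\<in>J'. S U)" unfolding J'_def by blast
    also have "\<dots> = (\<Union>n. S (g n))" using rg by auto
    also have "\<dots> \<subseteq> (\<Union>n. S (h n))"
    proof (rule UN_mono[OF subset_refl])
      fix n show "S (g n) \<subseteq> S (h n)" using hD[of n] by (intro Smono) blast
    qed
    finally show "(\<Union>U\<in>\<D>. S U) \<subseteq> (\<Union>n. S (h n))" .
  qed
  have "emeasure M (S (\<Union>\<D>)) = emeasure M (\<Union>n. S (h n))" using UnD eq by simp
  also have "\<dots> = (SUP n. emeasure M (S (h n)))"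
    by (rule SUP_emeasure_incseq[symmetric]) (use hD Ssets inc in auto)
  also have "\<dots> \<le> (SUP U\<in>\<D>. emeasure M (S U))"
    by (rule SUP_least) (use hD in \<open>auto intro: SUP_upper\<close>)
  finally have le: "emeasure M (S (\<Union>\<D>)) \<le> (SUP U\<in>\<D>. emeasure M (S U))" .
  have ge: "(SUP U\<in>\<D>. emeasure M (S U)) \<le> emeasure M (S (\<Union>\<D>))"
  proof (rule SUP_least)
    fix U assume "U \<in> \<D>"
    have "S (\<Union>\<D>) \<in> sets M" unfolding S_def using D by (intro pts_sets[OF M] scott_open_Union) auto
    then show "emeasure M (S U) \<le> emeasure M (S (\<Union>\<D>))"
      using \<open>U \<in> \<D>\<close> by (intro emeasure_mono Smono) auto
  qed
  from le ge show "emeasure M {x. {x} \<in> \<Union>\<D>} = (SUP U\<in>\<D>. emeasure M {x. {x} \<in> U})"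
    unfolding S_def by (rule antisym)
qed

lemma not_pc:
  assumes M: "sets M = sets borel"
    and U0: "openin sorgenfrey U0" "0 < emeasure M U0" "emeasure M U0 < \<infinity>"
      "\<forall>x\<in>U0. emeasure M {x} = 0"
  shows "\<not> point_continuous scott_QRl (mubar M)"
proof
  assume pc: "point_continuous scott_QRl (mubar M)"
  have spM: "space M = UNIV" using sets_eq_imp_space_eq[OF M] by simp
  have U0s: "U0 \<in> sets M" using sorgenfrey_open_borel[OF U0(1)] M by simp
  define t where "t = enn2real (emeasure M U0)"
  have t: "emeasure M U0 = ennreal t" "t > 0"
    using U0(2,3) unfolding t_def by (auto simp: enn2real_positive_iff)
  define r where "r = t / 2"
  have r: "r > 0" "0 \<le> r" "r < t" using t(2) unfolding r_def by auto
  define \<U> where "\<U> = {K\<in>QRl. K \<subseteq> U0}"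
  have Uop: "openin scott_QRl \<U>" unfolding \<U>_def openin_scott by (rule scott_open_below[OF U0(1)])
  have "{x. {x} \<in> \<U>} = U0" unfolding \<U>_def using singleton_QRl by auto
  then have "mubar M \<U> = ennreal t" unfolding mubar_def using t by simp
  then have "ennreal r < mubar M \<U>" using r by (simp add: ennreal_less_iff)
  then obtain A where A: "finite A" "A \<subseteq> \<U>"
      "\<And>V. openin scott_QRl V \<and> A \<subseteq> V \<Longrightarrow> ennreal r < mubar M V"
  proof -
    have "\<forall>U (r::real). openin scott_QRl U \<and> 0 \<le> r \<and> ennreal r < mubar M U \<longrightarrow>
        (\<exists>A. finite A \<and> A \<subseteq> U \<and> (\<forall>V. openin scott_QRl V \<and> A \<subseteq> V \<longrightarrow> ennreal r < mubar M V))"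
      using pc unfolding point_continuous_def by simp
    then have "openin scott_QRl \<U> \<and> 0 \<le> r \<and> ennreal r < mubar M \<U> \<longrightarrow>
        (\<exists>A. finite A \<and> A \<subseteq> \<U> \<and> (\<forall>V. openin scott_QRl V \<and> A \<subseteq> V \<longrightarrow> ennreal r < mubar M V))"
      by (rule spec2)
    then have "\<exists>A. finite A \<and> A \<subseteq> \<U> \<and> (\<forall>V. openin scott_QRl V \<and> A \<subseteq> V \<longrightarrow> ennreal r < mubar M V)"
      using Uop r(2) \<open>ennreal r < mubar M \<U>\<close> by blast
    then show ?thesis using that by blast
  qed
  define C where "C = \<Union>A"
  have CU: "C \<subseteq> U0" using A(2) unfolding C_def \<U>_def by blast
  have cC: "countable C" unfolding C_def
  proof (rule countable_UN[of A id, simplified])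
    show "countable A" using A(1) by (rule countable_finite)
    fix K assume "K \<in> A" then show "countable K" using A(2) QRl_countable unfolding \<U>_def by blast
  qed
  have Cs: "C \<in> sets borel" by (rule sets.countable) (use cC in auto)
  have "emeasure M C = (\<integral>\<^sup>+x. emeasure M {x} \<partial>count_space C)"
    using M cC by (intro emeasure_countable_singleton) auto
  also have "\<dots> = (\<integral>\<^sup>+x. 0 \<partial>count_space C)"
    using CU U0(4) by (intro nn_integral_cong) auto
  finally have C0: "emeasure M C = 0" by simp
  define N where "N = density M (indicator U0)"
  have sN: "sets N = sets borel" unfolding N_def using M by simp
  have spN: "space N = UNIV" unfolding N_def using spM by simp
  have eN: "X \<in> sets borel \<Longrightarrow> emeasure N X = emeasure M (U0 \<inter> X)" for X
    unfolding N_def using U0s M by (intro emeasure_restricted) auto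
  have "emeasure N (space N) = emeasure M U0" using eN[of UNIV] spN by simp
  then have finN: "emeasure N (space N) \<noteq> \<infinity>" using U0(3) by simp
  have "emeasure N C = 0" using eN[OF Cs] CU C0 by (simp add: Int_absorb1)
  then have "(INF U\<in>{U. C \<subseteq> U \<and> open U}. emeasure N U) < ennreal r"
    using outer_regular[OF sN finN Cs] r by simp
  then obtain G where G: "C \<subseteq> G" "open G" "emeasure N G < ennreal r"
    unfolding INF_less_iff by auto
  define W where "W = U0 \<inter> G"
  have Wop: "openin sorgenfrey W" unfolding W_def using U0(1) open_imp_sorgenfrey[OF G(2)] by blast
  have "G \<in> sets borel" using G(2) by simp
  then have muW: "emeasure M W < ennreal r" using eN G(3) unfolding W_def by simp
  define V where "V = {K\<in>QRl. K \<subseteq> W}"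
  have Vop: "openin scott_QRl V" unfolding V_def openin_scott by (rule scott_open_below[OF Wop])
  have "A \<subseteq> V"
  proof
    fix K assume "K \<in> A"
    then have "K \<in> QRl" "K \<subseteq> C" using A(2) unfolding \<U>_def C_def by auto
    then show "K \<in> V" unfolding V_def W_def using G(1) CU by blast
  qed
  then have "ennreal r < mubar M V" using A(3)[of V] Vop by simp
  moreover have "{x. {x} \<in> V} = W" unfolding V_def using singleton_QRl by auto
  ultimately show False using muW unfolding mubar_def by simp
qed

theorem theorem4p21:
  fixes M :: "real measure"
  assumes "sets M = sets borel"
    and "\<exists>U. openin sorgenfrey U \<and> 0 < emeasure M U \<and> emeasure M U < \<infinity>
              \<and> (\<forall>x\<in>U. emeasure M {x} = 0)"
  shows "continuous_valuation scott_QRl (mubar M) \<and> \<not> point_continuous scott_QRl (mubar M)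
         \<and> continuous_valuation scott_QRl (mubar lborel) \<and> \<not> point_continuous scott_QRl (mubar lborel)"
proof (intro conjI)
  show "continuous_valuation scott_QRl (mubar M)" using cont_val[OF assms(1)] .
  show "continuous_valuation scott_QRl (mubar lborel)" by (rule cont_val) simp
  obtain U where U: "openin sorgenfrey U" "0 < emeasure M U" "emeasure M U < \<infinity>"
      "\<forall>x\<in>U. emeasure M {x} = 0"
    using assms(2) by blast
  show "\<not> point_continuous scott_QRl (mubar M)" by (rule not_pc[OF assms(1) U])
  have op: "openin sorgenfrey {0..<1::real}"
    unfolding sorgenfrey_open_iff
  proof
    fix x :: real assume "x \<in> {0..<1}"
    then have x: "0 \<le> x" "x < 1" by auto
    have "{x..<x+(1-x)} \<subseteq> {0..<1}" using x by (simp add: subset_eq)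
    moreover have "(1 - x) > 0" using x by simp
    ultimately show "\<exists>d>0. {x..<x+d} \<subseteq> {0..<1}" by blast
  qed
  have e1: "emeasure lborel {0..<1::real} = 1" using emeasure_lborel_Ico[of 0 "1::real"] by simp
  show "\<not> point_continuous scott_QRl (mubar lborel)"
  proof (rule not_pc[OF _ op])
    show "sets lborel = sets borel" by simp
    show "0 < emeasure lborel {0..<1::real}" using e1 by simp
    show "emeasure lborel {0..<1::real} < \<infinity>" using e1 by simp
    show "\<forall>x\<in>{0..<1::real}. emeasure lborel {x} = 0" by simp
  qed
qed

end
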